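(* Let $\alpha,\beta$ be real constants with $\alpha+2\beta=1$ and $\beta\le 2/3$, and let $A,B>0$. There exist constants $C_1>0$ and $c>0$ (depending only on $\alpha,\beta,A,B$) such that the following holds. Let $m,n$ be positive integers with $m\le n^2/C_1$ and $n\le m^2/C_1$, and let $P$ be a finite set of points and $L$ a finite set of lines in $\mathbb{R}^2$ with $|L|\le A\,m^{\alpha}n^{\beta}$ and $|I(P,L)|\ge B\,m^{\alpha-\frac13}n^{\beta+\frac23}$. Then $|P|\ge c\,m^{\frac12\alpha-\frac12}n^{\frac12\beta+1}$.
   Context: $I(P,L)$ denotes the set of incidences between $P$ and $L$, i.e. pairs $(p,\ell)\in P\times L$ with $p\in\ell$. *)

theory Defs
  imports Complex_Main
begin

definition is_line :: "(real \<times> real) set \<Rightarrow> bool" where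
  "is_line l \<longleftrightarrow> (\<exists>a b c. (a, b) \<noteq> (0, 0) \<and> l = {(x, y). a * x + b * y = c})"

definition incidences :: "(real \<times> real) set \<Rightarrow> (real \<times> real) set set \<Rightarrow> ((real \<times> real) \<times> (real \<times> real) set) set" where
  "incidences P L = {(p, l). p \<in> P \<and> l \<in> L \<and> p \<in> l}"

end

theory Submission
  imports Defs
begin


type_synonym pt = "real \<times> real"

definition slope :: "pt \<times> pt \<Rightarrow> real" where
  "slope e = (snd (snd e) - snd (fst e)) / (fst (snd e) - fst (fst e))"

definition hgt :: "pt \<times> pt \<Rightarrow> real \<Rightarrow> real" where
  "hgt e x = snd (fst e) + (x - fst (fst e)) * slope e"

definition ondom :: "pt \<times> pt \<Rightarrow> real \<Rightarrow> bool" where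
  "ondom e x \<longleftrightarrow> fst (fst e) \<le> x \<and> x \<le> fst (snd e)"

definition cross :: "pt \<times> pt \<Rightarrow> pt \<times> pt \<Rightarrow> bool" where
  "cross e f \<longleftrightarrow> (\<exists>x. ondom e x \<and> ondom f x \<and> hgt e x = hgt f x \<and>
      (x, hgt e x) \<notin> {fst e, snd e} \<inter> {fst f, snd f})"

lemma hgt_left: "hgt e (fst (fst e)) = snd (fst e)"
  by (simp add: hgt_def)

lemma hgt_right: "fst (fst e) \<noteq> fst (snd e) \<Longrightarrow> hgt e (fst (snd e)) = snd (snd e)"
  by (simp add: hgt_def slope_def)

lemma hgt_right': "fst (fst e) \<noteq> fst (snd e) \<Longrightarrow> hgt e x = snd (snd e) + (x - fst (snd e)) * slope e"
  by (simp add: hgt_def slope_def field_simps)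

lemma hgt_diff: "hgt e y - hgt e x = (y - x) * slope e"
  by (simp add: hgt_def algebra_simps)

lemma consec_card:
  fixes f :: "'a \<Rightarrow> real"
  assumes "finite S" "inj_on f S"
  shows "card S \<le> card {(a,b). a \<in> S \<and> b \<in> S \<and> f a < f b \<and> \<not>(\<exists>c\<in>S. f a < f c \<and> f c < f b)} + 1"
  using assms
proof (induction "card S" arbitrary: S)
  case 0
  then show ?case by simp
next
  case (Suc k)
  define C where "C S = {(a,b). a \<in> S \<and> b \<in> S \<and> f a < f b \<and> \<not>(\<exists>c\<in>S. f a < f c \<and> f c < f b)}" for S
  have ne: "S \<noteq> {}" using Suc by auto
  have "Max (f ` S) \<in> f ` S" using Suc(3) ne by simp
  then obtain m where m0: "m \<in> S" "f m = Max (f ` S)" by auto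
  have m: "m \<in> S" "\<forall>x\<in>S. f x \<le> f m" using m0 Suc(3) by auto
  define S' where "S' = S - {m}"
  have cS': "card S' = k" using Suc m by (simp add: S'_def)
  have IH: "card S' \<le> card (C S') + 1"
    using Suc(1)[OF cS'[symmetric]] Suc(3,4) unfolding C_def S'_def by (auto intro: inj_on_subset)
  show ?case
  proof (cases "S' = {}")
    case True
    then show ?thesis using cS' Suc(2) by simp
  next
    case False
    have fS': "finite S'" using Suc(3) by (simp add: S'_def)
    have "Max (f ` S') \<in> f ` S'" using fS' False by simp
    then obtain m' where m0': "m' \<in> S'" "f m' = Max (f ` S')" by auto
    have m': "m' \<in> S'" "\<forall>x\<in>S'. f x \<le> f m'" using m0' fS' by auto
    have fm: "f m' < f m"
      using m m' Suc(4) unfolding S'_def inj_on_def by (metis DiffE le_less singletonI)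
    have sub: "insert (m', m) (C S') \<subseteq> C S"
    proof
      fix z assume z: "z \<in> insert (m', m) (C S')"
      show "z \<in> C S"
      proof (cases "z = (m', m)")
        case True
        have "\<not>(\<exists>c\<in>S. f m' < f c \<and> f c < f m)"
        proof
          assume "\<exists>c\<in>S. f m' < f c \<and> f c < f m"
          then obtain c where c: "c \<in> S" "f m' < f c" "f c < f m" by blast
          then have "c \<in> S'" unfolding S'_def by auto
          then show False using m'(2) c by force
        qed
        then show ?thesis using True m m' fm unfolding C_def S'_def by auto
      next
        case False
        then obtain a b where ab: "z = (a,b)" "(a,b) \<in> C S'" using z by (cases z) auto
        have "\<not>(\<exists>c\<in>S. f a < f c \<and> f c < f b)"
        proof
          assume "\<exists>c\<in>S. f a < f c \<and> f c < f b"
          then obtain c where c: "c \<in> S" "f a < f c" "f c < f b" by blast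
          have "c \<noteq> m" using c ab m unfolding C_def S'_def by force
          then show False using c ab unfolding C_def S'_def by auto
        qed
        then show ?thesis using ab unfolding C_def S'_def by auto
      qed
    qed
    have nin: "(m', m) \<notin> C S'" unfolding C_def S'_def by auto
    have fin: "finite (C S)"
      by (rule finite_subset[of _ "S \<times> S"]) (auto simp: C_def Suc(3))
    have "card (C S') + 1 = card (insert (m', m) (C S'))"
      using nin fin sub by (metis Suc_eq_plus1 card_insert_disjoint finite_subset subset_insertI)
    also have "\<dots> \<le> card (C S)" using card_mono[OF fin sub] .
    finally show ?thesis using IH cS' Suc(2) unfolding C_def by simp
  qed
qed


locale pg =
  fixes V :: "pt set" and E :: "(pt \<times> pt) set"
  assumes finV: "finite V" and injV: "inj_on fst V" and Esub: "E \<subseteq> V \<times> V"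
  and Eord: "e \<in> E \<Longrightarrow> fst (fst e) < fst (snd e)"
  and H4: "p \<in> V \<Longrightarrow> e \<in> E \<Longrightarrow> fst (fst e) < fst p \<Longrightarrow> fst p < fst (snd e) \<Longrightarrow> snd p \<noteq> hgt e (fst p)"
begin

lemma finE: "finite E"
  using finite_subset[OF Esub] finV by auto

lemma endsV: "e \<in> E \<Longrightarrow> fst e \<in> V \<and> snd e \<in> V"
  using Esub by auto

lemma eqV: "p \<in> V \<Longrightarrow> q \<in> V \<Longrightarrow> fst p = fst q \<Longrightarrow> p = q"
  using injV by (auto simp: inj_on_def)

end

locale pgnc = pg +
  assumes nc: "e \<in> E \<Longrightarrow> f \<in> E \<Longrightarrow> e \<noteq> f \<Longrightarrow> \<not> cross e f"
begin

lemma no_root: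
  assumes "e \<in> E" "f \<in> E" "e \<noteq> f" "fst (fst e) < z" "z < fst (snd e)" "ondom f z"
  shows "hgt e z \<noteq> hgt f z"
proof
  assume h: "hgt e z = hgt f z"
  have "(z, hgt e z) \<notin> {fst e, snd e}" using assms(4,5) by (cases "fst e", cases "snd e") auto
  then have "cross e f" unfolding cross_def ondom_def using assms h by (intro exI[of _ z]) (auto simp: ondom_def)
  then show False using nc assms by blast
qed

lemma stay:
  assumes "e \<in> E" "f \<in> E" "e \<noteq> f" "X \<le> Y" "fst (fst e) \<le> X" "fst (fst f) \<le> X"
    "Y \<le> fst (snd e)" "Y \<le> fst (snd f)"
    "hgt f X < hgt e X \<or> (hgt f X = hgt e X \<and> slope f < slope e)"
  shows "hgt f Y \<le> hgt e Y"
proof (rule ccontr)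
  assume "\<not> hgt f Y \<le> hgt e Y"
  then have hY: "hgt e Y - hgt f Y < 0" by simp
  define hX where "hX = hgt e X - hgt f X"
  have lin: "hgt e t - hgt f t = hX + (t - X) * (slope e - slope f)" for t
    using hgt_diff[of e t X] hgt_diff[of f t X] unfolding hX_def by (simp add: algebra_simps)
  have "hX > 0"
  proof (rule ccontr)
    assume "\<not> hX > 0"
    then have "hX = 0" "slope f < slope e" using assms(9) unfolding hX_def by auto
    then have "hgt e Y - hgt f Y \<ge> 0" using lin[of Y] assms(4) by simp
    then show False using hY by simp
  qed
  have XY: "X < Y" using hY lin[of Y] \<open>hX > 0\<close> assms(4)
    by (cases "X = Y") auto
  have sl: "slope e - slope f < 0"
  proof (rule ccontr)
    assume "\<not> slope e - slope f < 0"
    then have "(Y - X) * (slope e - slope f) \<ge> 0" using XY by simp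
    then show False using hY lin[of Y] \<open>hX > 0\<close> by simp
  qed
  define z where "z = X + hX / (slope f - slope e)"
  have z1: "X < z" unfolding z_def using \<open>hX > 0\<close> sl by simp
  have "hX < (Y - X) * (slope f - slope e)" using hY lin[of Y] by (simp add: algebra_simps)
  then have "hX / (slope f - slope e) < Y - X" using sl by (simp add: pos_divide_less_eq)
  then have z2: "z < Y" unfolding z_def by simp
  have "hgt e z - hgt f z = 0"
    using lin[of z] sl unfolding z_def by (simp add: field_simps)
  moreover have "hgt e z \<noteq> hgt f z"
    by (rule no_root) (use assms z1 z2 in \<open>auto simp: ondom_def\<close>)
  ultimately show False by simp
qed

lemma slope_inj_left:
  assumes "e \<in> E" "f \<in> E" "snd e = snd f" "slope e = slope f"
  shows "e = f"
proof (rule ccontr)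
  assume ne: "e \<noteq> f"
  define x where "x = max (fst (fst e)) (fst (fst f))"
  have o1: "fst (fst e) < fst (snd e)" "fst (fst f) < fst (snd f)" using Eord[OF assms(1)] Eord[OF assms(2)] by auto
  have h: "hgt e x = hgt f x" using hgt_right'[of e x] hgt_right'[of f x] o1 assms(3,4) by simp
  show False
  proof (cases "fst (fst e) < x")
    case True
    then show ?thesis using no_root[OF assms(1,2) ne True] h o1 assms(3) by (auto simp: ondom_def x_def)
  next
    case False
    then have "x = fst (fst e)" unfolding x_def by auto
    show ?thesis
    proof (cases "fst (fst f) < x")
      case True
      then show ?thesis using no_root[OF assms(2,1) ne[symmetric] True] h o1 assms(3) by (auto simp: ondom_def x_def)
    next
      case False
      then have "fst (fst e) = fst (fst f)" using \<open>x = fst (fst e)\<close> unfolding x_def by (auto simp: max_def split: if_splits)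
      then have "fst e = fst f" using eqV endsV assms(1,2) by blast
      then show False using ne assms(3) by (simp add: prod_eq_iff)
    qed
  qed
qed

lemma slope_inj_right:
  assumes "e \<in> E" "f \<in> E" "fst e = fst f" "slope e = slope f"
  shows "e = f"
proof (rule ccontr)
  assume ne: "e \<noteq> f"
  define x where "x = min (fst (snd e)) (fst (snd f))"
  have o1: "fst (fst e) < fst (snd e)" "fst (fst f) < fst (snd f)" using Eord[OF assms(1)] Eord[OF assms(2)] by auto
  have h: "hgt e x = hgt f x" using assms(3,4) by (simp add: hgt_def)
  show False
  proof (cases "x < fst (snd e)")
    case True
    then show ?thesis using no_root[OF assms(1,2) ne _ True] h o1 assms(3) by (auto simp: ondom_def x_def)
  next
    case False
    then have "x = fst (snd e)" unfolding x_def by auto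
    show ?thesis
    proof (cases "x < fst (snd f)")
      case True
      then show ?thesis using no_root[OF assms(2,1) ne[symmetric] _ True] h o1 assms(3) by (auto simp: ondom_def x_def)
    next
      case False
      then have "fst (snd e) = fst (snd f)" using \<open>x = fst (snd e)\<close> unfolding x_def by (auto simp: min_def split: if_splits)
      then have "snd e = snd f" using eqV endsV assms(1,2) by blast
      then show False using ne assms(3) by (simp add: prod_eq_iff)
    qed
  qed
qed

end


context pg begin
definition Cl where
  "Cl = {(e1,e2). e1 \<in> E \<and> e2 \<in> E \<and> snd e1 = snd e2 \<and> slope e1 < slope e2 \<and>
     \<not>(\<exists>f\<in>E. snd f = snd e1 \<and> slope e1 < slope f \<and> slope f < slope e2)}"
definition Tset where
  "Tset e1 e2 = {p \<in> V. fst (fst e1) \<le> fst p \<and> fst (fst e2) \<le> fst p \<and> fst p < fst (snd e1) \<and>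
     hgt e2 (fst p) \<le> snd p \<and> snd p \<le> hgt e1 (fst p)}"
definition vs where
  "vs e1 e2 = (SOME p. p \<in> Tset e1 e2 \<and> (\<forall>q\<in>Tset e1 e2. fst q \<le> fst p))"
definition tg where
  "tg e1 e2 = (if vs e1 e2 = fst e1 then 0 else if vs e1 e2 = fst e2 then 1 else (2::nat))"
end

context pgnc begin

lemma above:
  assumes "(e1,e2) \<in> Cl" "x < fst (snd e1)"
  shows "hgt e2 x < hgt e1 x"
proof -
  have c: "e1 \<in> E" "e2 \<in> E" "snd e1 = snd e2" "slope e1 < slope e2" using assms(1) unfolding Cl_def by auto
  have "hgt e1 x - hgt e2 x = (x - fst (snd e1)) * (slope e1 - slope e2)"
    using hgt_right'[of e1 x] hgt_right'[of e2 x] Eord[OF c(1)] Eord[OF c(2)] c(3)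
    by (simp add: algebra_simps)
  moreover have "(x - fst (snd e1)) * (slope e1 - slope e2) > 0"
    using assms(2) c(4) by (simp add: mult_neg_neg)
  ultimately show ?thesis by simp
qed

lemma Gmain:
  assumes c: "(e1,e2) \<in> Cl" and f: "f \<in> E" "f \<noteq> e1" "f \<noteq> e2" "fst (fst f) \<le> X" "X < fst (snd f)"
    and X: "fst (fst e1) \<le> X" "fst (fst e2) \<le> X" "X < fst (snd e1)"
    and c1: "hgt f X < hgt e1 X \<or> (hgt f X = hgt e1 X \<and> slope f < slope e1)"
    and c2: "hgt e2 X < hgt f X \<or> (hgt e2 X = hgt f X \<and> slope e2 < slope f)"
  shows "\<exists>r\<in>Tset e1 e2. X < fst r"
proof -
  have cc: "e1 \<in> E" "e2 \<in> E" "snd e1 = snd e2" "slope e1 < slope e2"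
    "\<not>(\<exists>f\<in>E. snd f = snd e1 \<and> slope e1 < slope f \<and> slope f < slope e2)"
    using c unfolding Cl_def by auto
  define w where "w = snd e1"
  define Y where "Y = min (fst (snd f)) (fst w)"
  have o: "fst (fst e1) < fst (snd e1)" "fst (fst e2) < fst (snd e2)" "fst (fst f) < fst (snd f)"
    using Eord[OF cc(1)] Eord[OF cc(2)] Eord[OF f(1)] by auto
  have up: "hgt f Y \<le> hgt e1 Y"
    by (rule stay[OF cc(1) f(1) f(2)[symmetric]]) (use f X c1 in \<open>auto simp: Y_def w_def\<close>)
  have lo: "hgt e2 Y \<le> hgt f Y"
    by (rule stay[OF f(1) cc(2) f(3)]) (use f X c2 cc(3) in \<open>auto simp: Y_def w_def\<close>)
  show ?thesis
  proof (cases "fst (snd f) < fst w")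
    case True
    then have Y: "Y = fst (snd f)" unfolding Y_def by simp
    have r: "snd f \<in> V" using endsV f(1) by auto
    have "hgt f (fst (snd f)) = snd (snd f)" using hgt_right o(3) by simp
    then have "snd f \<in> Tset e1 e2" unfolding Tset_def using r up lo Y True X f o
      by (auto simp: w_def)
    then show ?thesis using f by auto
  next
    case False
    then have Y: "Y = fst w" unfolding Y_def by simp
    have w1: "hgt e1 (fst w) = snd w" using hgt_right o(1) by (simp add: w_def)
    have w2: "hgt e2 (fst w) = snd w" using hgt_right o(2) cc(3) by (simp add: w_def)
    have hw: "hgt f (fst w) = snd w" using up lo Y w1 w2 by simp
    have wV: "w \<in> V" using endsV cc(1) w_def by auto
    have "fst w = fst (snd f)"
    proof (rule ccontr)
      assume "fst w \<noteq> fst (snd f)"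
      then have "fst w < fst (snd f)" using False by simp
      moreover have "fst (fst f) < fst w" using f X w_def by auto
      ultimately show False using H4[OF wV f(1)] hw by auto
    qed
    then have sf: "snd f = w" using eqV wV endsV f(1) by metis
    have d1: "hgt e1 X - hgt f X = (X - fst w) * (slope e1 - slope f)"
      using hgt_right'[of e1 X] hgt_right'[of f X] o sf by (simp add: w_def algebra_simps)
    have d2: "hgt f X - hgt e2 X = (X - fst w) * (slope f - slope e2)"
      using hgt_right'[of e2 X] hgt_right'[of f X] o sf cc(3) by (simp add: w_def algebra_simps)
    have Xw: "X - fst w < 0" using X w_def by simp
    have s1: "slope e1 < slope f"
    proof -
      have "(X - fst w) * (slope e1 - slope f) > 0 \<or> slope f < slope e1 \<and> (X - fst w) * (slope e1 - slope f) = 0"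
        using c1 d1 by auto
      then show ?thesis using Xw by (auto simp: zero_less_mult_iff)
    qed
    have s2: "slope f < slope e2"
    proof -
      have "(X - fst w) * (slope f - slope e2) > 0 \<or> slope e2 < slope f \<and> (X - fst w) * (slope f - slope e2) = 0"
        using c2 d2 by auto
      then show ?thesis using Xw by (auto simp: zero_less_mult_iff)
    qed
    then show ?thesis using cc(5) s1 f(1) sf w_def by auto
  qed
qed

end


context pgnc begin

lemma vs_prop:
  assumes "(e1,e2) \<in> Cl"
  shows "vs e1 e2 \<in> Tset e1 e2 \<and> (\<forall>q\<in>Tset e1 e2. fst q \<le> fst (vs e1 e2))"
proof -
  have cc: "e1 \<in> E" "e2 \<in> E" "snd e1 = snd e2"
    using assms unfolding Cl_def by auto
  have o: "fst (fst e1) < fst (snd e1)" "fst (fst e2) < fst (snd e2)"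
    using Eord[OF cc(1)] Eord[OF cc(2)] by auto
  have ne: "Tset e1 e2 \<noteq> {}"
  proof (cases "fst (fst e2) \<le> fst (fst e1)")
    case True
    have "hgt e2 (fst (fst e1)) < hgt e1 (fst (fst e1))" using above[OF assms] o by simp
    then have "fst e1 \<in> Tset e1 e2" using True o endsV[OF cc(1)] unfolding Tset_def
      by (auto simp: hgt_left)
    then show ?thesis by auto
  next
    case False
    have "hgt e2 (fst (fst e2)) < hgt e1 (fst (fst e2))" using above[OF assms] o cc(3) by simp
    then have "fst e2 \<in> Tset e1 e2" using False o endsV[OF cc(2)] cc(3) unfolding Tset_def
      by (auto simp: hgt_left)
    then show ?thesis by auto
  qed
  have fin: "finite (Tset e1 e2)" using finV unfolding Tset_def by auto
  have "Max (fst ` Tset e1 e2) \<in> fst ` Tset e1 e2" using fin ne by simp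
  then obtain p where p: "p \<in> Tset e1 e2" "fst p = Max (fst ` Tset e1 e2)" by auto
  have "\<forall>q\<in>Tset e1 e2. fst q \<le> fst p" using p fin by auto
  then have "\<exists>p. p \<in> Tset e1 e2 \<and> (\<forall>q\<in>Tset e1 e2. fst q \<le> fst p)" using p by blast
  then show ?thesis unfolding vs_def by (rule someI_ex)
qed

lemma ne12:
  assumes "(e1,e2) \<in> Cl" shows "fst e1 \<noteq> fst e2" "e1 \<noteq> e2"
proof -
  show n: "e1 \<noteq> e2" using assms unfolding Cl_def by auto
  have "snd e1 = snd e2" using assms unfolding Cl_def by auto
  then show "fst e1 \<noteq> fst e2" using n by (auto intro: prod_eqI)
qed

lemma tag0:
  assumes c: "(e1,e2) \<in> Cl" and v: "vs e1 e2 = fst e1" and f: "f \<in> E" "fst f = fst e1"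
  shows "slope e1 \<le> slope f"
proof (rule ccontr)
  assume "\<not> slope e1 \<le> slope f"
  then have sl: "slope f < slope e1" by simp
  have cc: "e1 \<in> E" "e2 \<in> E" "snd e1 = snd e2" using c unfolding Cl_def by auto
  have T: "vs e1 e2 \<in> Tset e1 e2" "\<forall>q\<in>Tset e1 e2. fst q \<le> fst (vs e1 e2)" using vs_prop[OF c] by auto
  define X where "X = fst (fst e1)"
  have fe1: "f \<noteq> e1" using sl by auto
  have fe2: "f \<noteq> e2" using ne12[OF c] f by auto
  have XT: "fst (fst e1) \<le> X" "fst (fst e2) \<le> X" "X < fst (snd e1)"
    using T(1) v unfolding Tset_def X_def by auto
  have hf: "hgt f X = hgt e1 X" using hgt_left[of f] hgt_left[of e1] f(2) unfolding X_def by simp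
  have "\<exists>r\<in>Tset e1 e2. X < fst r"
    apply (rule Gmain[OF c f(1) fe1 fe2])
    using f Eord[OF f(1)] XT hf sl above[OF c XT(3)] by (auto simp: X_def)
  then show False using T(2) v X_def by force
qed

lemma tag1:
  assumes c: "(e1,e2) \<in> Cl" and v: "vs e1 e2 = fst e2" and f: "f \<in> E" "fst f = fst e2"
  shows "slope f \<le> slope e2"
proof (rule ccontr)
  assume "\<not> slope f \<le> slope e2"
  then have sl: "slope e2 < slope f" by simp
  have cc: "e1 \<in> E" "e2 \<in> E" "snd e1 = snd e2" using c unfolding Cl_def by auto
  have T: "vs e1 e2 \<in> Tset e1 e2" "\<forall>q\<in>Tset e1 e2. fst q \<le> fst (vs e1 e2)" using vs_prop[OF c] by auto
  define X where "X = fst (fst e2)"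
  have fe2: "f \<noteq> e2" using sl by auto
  have fe1: "f \<noteq> e1" using ne12[OF c] f by auto
  have XT: "fst (fst e1) \<le> X" "fst (fst e2) \<le> X" "X < fst (snd e1)"
    using T(1) v unfolding Tset_def X_def by auto
  have hf: "hgt f X = hgt e2 X" using hgt_left[of f] hgt_left[of e2] f(2) unfolding X_def by simp
  have "\<exists>r\<in>Tset e1 e2. X < fst r"
    apply (rule Gmain[OF c f(1) fe1 fe2])
    using f Eord[OF f(1)] XT hf sl above[OF c XT(3)] by (auto simp: X_def)
  then show False using T(2) v X_def by force
qed

lemma tag2c:
  assumes c: "(e1,e2) \<in> Cl" and v: "vs e1 e2 \<noteq> fst e1" "vs e1 e2 \<noteq> fst e2"
  shows "fst (fst e1) < fst (vs e1 e2)" "fst (vs e1 e2) < fst (snd e1)" "snd (vs e1 e2) < hgt e1 (fst (vs e1 e2))"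
    "fst (fst e2) < fst (vs e1 e2)" "fst (vs e1 e2) < fst (snd e2)" "hgt e2 (fst (vs e1 e2)) < snd (vs e1 e2)"
proof -
  have cc: "e1 \<in> E" "e2 \<in> E" "snd e1 = snd e2" using c unfolding Cl_def by auto
  have T: "vs e1 e2 \<in> Tset e1 e2" using vs_prop[OF c] by auto
  then have vV: "vs e1 e2 \<in> V" unfolding Tset_def by auto
  have a1: "fst (fst e1) \<noteq> fst (vs e1 e2)" using eqV[OF conjunct1[OF endsV[OF cc(1)]] vV] v by auto
  have a2: "fst (fst e2) \<noteq> fst (vs e1 e2)" using eqV[OF conjunct1[OF endsV[OF cc(2)]] vV] v by auto
  show g1: "fst (fst e1) < fst (vs e1 e2)" "fst (vs e1 e2) < fst (snd e1)"
    "fst (fst e2) < fst (vs e1 e2)" "fst (vs e1 e2) < fst (snd e2)"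
    using T a1 a2 cc(3) unfolding Tset_def by auto
  show "snd (vs e1 e2) < hgt e1 (fst (vs e1 e2))"
    using T H4[OF vV cc(1) g1(1,2)] unfolding Tset_def by auto
  show "hgt e2 (fst (vs e1 e2)) < snd (vs e1 e2)"
    using T H4[OF vV cc(2) g1(3,4)] unfolding Tset_def by auto
qed

lemma tag2a:
  assumes c: "(e1,e2) \<in> Cl" and v: "vs e1 e2 \<noteq> fst e1" "vs e1 e2 \<noteq> fst e2"
    and f: "f \<in> E" "fst (fst f) < fst (vs e1 e2)" "fst (vs e1 e2) < fst (snd f)"
      "snd (vs e1 e2) < hgt f (fst (vs e1 e2))"
  shows "hgt e1 (fst (vs e1 e2)) \<le> hgt f (fst (vs e1 e2))"
proof (rule ccontr)
  define X where "X = fst (vs e1 e2)"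
  assume "\<not> ?thesis"
  then have h: "hgt f X < hgt e1 X" unfolding X_def by simp
  have T: "\<forall>q\<in>Tset e1 e2. fst q \<le> X" using vs_prop[OF c] X_def by auto
  note t = tag2c[OF c v, folded X_def]
  have fe1: "f \<noteq> e1" using h by auto
  have fe2: "f \<noteq> e2" using t(6) f(4) X_def by auto
  have "\<exists>r\<in>Tset e1 e2. X < fst r"
    apply (rule Gmain[OF c f(1) fe1 fe2])
    using f t h X_def by auto
  then show False using T by force
qed

lemma tag2b:
  assumes c: "(e1,e2) \<in> Cl" and v: "vs e1 e2 \<noteq> fst e1" "vs e1 e2 \<noteq> fst e2"
    and f: "f \<in> E" "fst (fst f) < fst (vs e1 e2)" "fst (vs e1 e2) < fst (snd f)"
      "hgt f (fst (vs e1 e2)) < snd (vs e1 e2)"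
  shows "hgt f (fst (vs e1 e2)) \<le> hgt e2 (fst (vs e1 e2))"
proof (rule ccontr)
  define X where "X = fst (vs e1 e2)"
  assume "\<not> ?thesis"
  then have h: "hgt e2 X < hgt f X" unfolding X_def by simp
  have T: "\<forall>q\<in>Tset e1 e2. fst q \<le> X" using vs_prop[OF c] X_def by auto
  note t = tag2c[OF c v, folded X_def]
  have fe2: "f \<noteq> e2" using h by auto
  have fe1: "f \<noteq> e1" using t(3) f(4) X_def by auto
  have "\<exists>r\<in>Tset e1 e2. X < fst r"
    apply (rule Gmain[OF c f(1) fe1 fe2])
    using f t h X_def by auto
  then show False using T by force
qed

end


context pgnc begin

lemma Cl_inj: "inj_on (\<lambda>c. (vs (fst c) (snd c), tg (fst c) (snd c))) Cl"
proof (rule inj_onI)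
  fix c c' assume cC: "c \<in> Cl" "c' \<in> Cl"
    and eq: "(vs (fst c) (snd c), tg (fst c) (snd c)) = (vs (fst c') (snd c'), tg (fst c') (snd c'))"
  obtain e1 e2 where c: "c = (e1,e2)" by (cases c)
  obtain e1' e2' where c': "c' = (e1',e2')" by (cases c')
  have C: "(e1,e2) \<in> Cl" "(e1',e2') \<in> Cl" using cC c c' by auto
  have cc: "e1 \<in> E" "e2 \<in> E" "snd e1 = snd e2" "slope e1 < slope e2"
    "\<not>(\<exists>f\<in>E. snd f = snd e1 \<and> slope e1 < slope f \<and> slope f < slope e2)"
    using C(1) unfolding Cl_def by auto
  have cc': "e1' \<in> E" "e2' \<in> E" "snd e1' = snd e2'" "slope e1' < slope e2'"
    "\<not>(\<exists>f\<in>E. snd f = snd e1' \<and> slope e1' < slope f \<and> slope f < slope e2')"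
    using C(2) unfolding Cl_def by auto
  define v where "v = vs e1 e2"
  have v': "vs e1' e2' = v" using eq c c' v_def by auto
  have tgeq: "tg e1 e2 = tg e1' e2'" using eq c c' by auto
  have ne: "fst e1 \<noteq> fst e2" "fst e1' \<noteq> fst e2'" using ne12 C by auto
  have from1: "e2 = e2'" if "e1 = e1'"
  proof -
    have s: "snd e2 = snd e2'" using cc(3) cc'(3) that by simp
    have "\<not> slope e2 < slope e2'"
    proof
      assume "slope e2 < slope e2'"
      then have "e2 \<in> E \<and> snd e2 = snd e1' \<and> slope e1' < slope e2 \<and> slope e2 < slope e2'"
        using cc(2,4) cc(3) cc'(3) that by simp
      then show False using cc'(5) by blast
    qed
    moreover have "\<not> slope e2' < slope e2"
    proof
      assume "slope e2' < slope e2"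
      then have "e2' \<in> E \<and> snd e2' = snd e1 \<and> slope e1 < slope e2' \<and> slope e2' < slope e2"
        using cc'(2,4) cc(3) cc'(3) that by simp
      then show False using cc(5) by blast
    qed
    ultimately show ?thesis using slope_inj_left[OF cc(2) cc'(2) s] by simp
  qed
  have from2: "e1 = e1'" if "e2 = e2'"
  proof -
    have s: "snd e1 = snd e1'" using cc(3) cc'(3) that by simp
    have "\<not> slope e1 < slope e1'"
    proof
      assume "slope e1 < slope e1'"
      then have "e1' \<in> E \<and> snd e1' = snd e1 \<and> slope e1 < slope e1' \<and> slope e1' < slope e2"
        using cc'(1,4) cc(3) cc'(3) that by simp
      then show False using cc(5) by blast
    qed
    moreover have "\<not> slope e1' < slope e1"
    proof
      assume "slope e1' < slope e1"
      then have "e1 \<in> E \<and> snd e1 = snd e1' \<and> slope e1' < slope e1 \<and> slope e1 < slope e2'"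
        using cc(1,4) cc(3) cc'(3) that by simp
      then show False using cc'(5) by blast
    qed
    ultimately show ?thesis using slope_inj_left[OF cc(1) cc'(1) s] by simp
  qed
  show "c = c'"
  proof (cases "v = fst e1")
    case True
    then have "tg e1 e2 = 0" unfolding tg_def v_def by simp
    then have "tg e1' e2' = 0" using tgeq by simp
    then have "vs e1' e2' = fst e1'" unfolding tg_def by (auto split: if_splits)
    then have "v = fst e1'" using v' by simp
    have "slope e1 \<le> slope e1'" using tag0[OF C(1) _ cc'(1)] True \<open>v = fst e1'\<close> v_def by simp
    moreover have "slope e1' \<le> slope e1" using tag0[OF C(2) _ cc(1)] True \<open>v = fst e1'\<close> v' by simp
    ultimately have sl: "slope e1 = slope e1'" by simp
    have "fst e1 = fst e1'" using True \<open>v = fst e1'\<close> by simp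
    then have "e1 = e1'" using slope_inj_right[OF cc(1) cc'(1)] sl by blast
    then show ?thesis using from1 c c' by simp
  next
    case F1: False
    show ?thesis
    proof (cases "v = fst e2")
      case True
      have T1: "vs e1 e2 = fst e2" "vs e1 e2 \<noteq> fst e1" using True F1 v_def by auto
      have "tg e1 e2 = 1" unfolding tg_def using T1 by simp
      then have "tg e1' e2' = 1" using tgeq by simp
      then have "vs e1' e2' = fst e2'" "vs e1' e2' \<noteq> fst e1'" unfolding tg_def by (auto split: if_splits)
      then have "v = fst e2'" "v \<noteq> fst e1'" using v' by auto
      have "slope e2' \<le> slope e2" using tag1[OF C(1) _ cc'(2)] True \<open>v = fst e2'\<close> v_def by simp
      moreover have "slope e2 \<le> slope e2'" using tag1[OF C(2) _ cc(2)] True \<open>v = fst e2'\<close> v' by simp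
      ultimately have sl: "slope e2 = slope e2'" by simp
      have "fst e2 = fst e2'" using True \<open>v = fst e2'\<close> by simp
      then have "e2 = e2'" using slope_inj_right[OF cc(2) cc'(2)] sl by blast
      then show ?thesis using from2 c c' by simp
    next
      case F2: False
      have "tg e1 e2 = 2" using F1[unfolded v_def] F2[unfolded v_def] unfolding tg_def by simp
      then have "tg e1' e2' = 2" using tgeq by simp
      then have "vs e1' e2' \<noteq> fst e1'" "vs e1' e2' \<noteq> fst e2'" unfolding tg_def by (auto split: if_splits)
      then have G: "v \<noteq> fst e1'" "v \<noteq> fst e2'" using v' by auto
      note t = tag2c[OF C(1) F1[unfolded v_def] F2[unfolded v_def], folded v_def]
      note t' = tag2c[OF C(2) G[folded v'], unfolded v']
      have h1: "hgt e1 (fst v) \<le> hgt e1' (fst v)"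
        using tag2a[OF C(1) F1[unfolded v_def] F2[unfolded v_def] cc'(1), folded v_def] t' by simp
      have h1': "hgt e1' (fst v) \<le> hgt e1 (fst v)"
        using tag2a[OF C(2) G[folded v'] cc(1), unfolded v'] t by simp
      have "e1 = e1'"
      proof (rule ccontr)
        assume "e1 \<noteq> e1'"
        then have "hgt e1 (fst v) \<noteq> hgt e1' (fst v)"
          using no_root[OF cc(1) cc'(1) _ t(1) t(2)] t' by (auto simp: ondom_def)
        then show False using h1 h1' by simp
      qed
      then show ?thesis using from1 c c' by simp
    qed
  qed
qed

lemma Cl_card: "card Cl \<le> 3 * card V"
proof -
  have sub: "(\<lambda>c. (vs (fst c) (snd c), tg (fst c) (snd c))) ` Cl \<subseteq> V \<times> {0,1,2}"
  proof
    fix z assume "z \<in> (\<lambda>c. (vs (fst c) (snd c), tg (fst c) (snd c))) ` Cl"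
    then obtain e1 e2 where "(e1,e2) \<in> Cl" "z = (vs e1 e2, tg e1 e2)" by auto
    then show "z \<in> V \<times> {0,1,2}" using vs_prop[of e1 e2] unfolding Tset_def tg_def by auto
  qed
  have "card Cl = card ((\<lambda>c. (vs (fst c) (snd c), tg (fst c) (snd c))) ` Cl)"
    using card_image[OF Cl_inj] by simp
  also have "\<dots> \<le> card (V \<times> {0::nat,1,2})" using card_mono[OF _ sub] finV by auto
  also have "\<dots> = 3 * card V" by (simp add: card_cartesian_product)
  finally show ?thesis .
qed

lemma E_card_Cl: "card E \<le> card Cl + card V"
proof -
  define LE where "LE w = {e \<in> E. snd e = w}" for w
  define CW where "CW w = {(a,b). a \<in> LE w \<and> b \<in> LE w \<and> slope a < slope b \<and> \<not>(\<exists>c\<in>LE w. slope a < slope c \<and> slope c < slope b)}" for w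
  have Eu: "E = (\<Union>w\<in>V. LE w)" unfolding LE_def using endsV by auto
  have Cu: "Cl = (\<Union>w\<in>V. CW w)"
  proof
    show "Cl \<subseteq> (\<Union>w\<in>V. CW w)"
    proof
      fix c assume "c \<in> Cl"
      then obtain e1 e2 where c: "c = (e1,e2)" "(e1,e2) \<in> Cl" by (cases c) auto
      then have "c \<in> CW (snd e1)" "snd e1 \<in> V" unfolding Cl_def CW_def LE_def using endsV by auto
      then show "c \<in> (\<Union>w\<in>V. CW w)" by auto
    qed
    show "(\<Union>w\<in>V. CW w) \<subseteq> Cl" unfolding Cl_def CW_def LE_def by auto
  qed
  have finLE: "finite (LE w)" for w using finE unfolding LE_def by auto
  have finCW: "finite (CW w)" for w
    by (rule finite_subset[of _ "LE w \<times> LE w"]) (auto simp: CW_def finLE)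
  have "card E = (\<Sum>w\<in>V. card (LE w))"
    unfolding Eu by (rule card_UN_disjoint) (use finV finLE in \<open>auto simp: LE_def\<close>)
  also have "\<dots> \<le> (\<Sum>w\<in>V. card (CW w) + 1)"
  proof (rule sum_mono)
    fix w assume "w \<in> V"
    have "inj_on slope (LE w)" using slope_inj_left unfolding LE_def inj_on_def by auto
    then show "card (LE w) \<le> card (CW w) + 1" using consec_card[OF finLE] unfolding CW_def by blast
  qed
  also have "\<dots> = (\<Sum>w\<in>V. card (CW w)) + card V" by (simp add: sum_Suc)
  also have "(\<Sum>w\<in>V. card (CW w)) = card Cl"
  proof (unfold Cu, rule card_UN_disjoint[symmetric])
    show "\<forall>i\<in>V. \<forall>j\<in>V. i \<noteq> j \<longrightarrow> CW i \<inter> CW j = {}"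
    proof (intro ballI impI)
      fix i j :: pt assume "i \<in> V" "j \<in> V" and ij: "i \<noteq> j"
      have "z \<notin> CW i \<inter> CW j" for z
      proof
        assume "z \<in> CW i \<inter> CW j"
        then have "fst z \<in> LE i" "fst z \<in> LE j" unfolding CW_def by auto
        then show False using ij unfolding LE_def by auto
      qed
      then show "CW i \<inter> CW j = {}" by blast
    qed
  qed (use finV finCW in auto)
  finally show ?thesis .
qed

theorem planar: "card E \<le> 4 * card V"
  using E_card_Cl Cl_card by simp

end



context pg begin

definition Xs where "Xs = {(e,f). e \<in> E \<and> f \<in> E \<and> e \<noteq> f \<and> cross e f}"

lemma finXs: "finite Xs"
  by (rule finite_subset[of _ "E \<times> E"]) (auto simp: Xs_def finE)

lemma crossing: "card E \<le> 4 * card V + card Xs"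
proof -
  define E' where "E' = E - fst ` Xs"
  interpret q: pgnc V E'
  proof
    show "finite V" by (rule finV)
    show "inj_on fst V" by (rule injV)
    show "E' \<subseteq> V \<times> V" using Esub E'_def by auto
    show "fst (fst e) < fst (snd e)" if "e \<in> E'" for e using Eord that E'_def by auto
    show "snd p \<noteq> hgt e (fst p)" if "p \<in> V" "e \<in> E'" "fst (fst e) < fst p" "fst p < fst (snd e)" for p e
      using H4 that E'_def by auto
    show "\<not> cross e f" if "e \<in> E'" "f \<in> E'" "e \<noteq> f" for e f
    proof
      assume "cross e f"
      then have "(e,f) \<in> Xs" using that E'_def Xs_def by auto
      then have "e \<in> fst ` Xs" by force
      then show False using that E'_def by auto
    qed
  qed
  have "card E \<le> card E' + card (fst ` Xs)"
  proof -
    have "E \<subseteq> E' \<union> fst ` Xs" unfolding E'_def by auto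
    then have "card E \<le> card (E' \<union> fst ` Xs)"
      by (rule card_mono[rotated]) (use finE finXs in \<open>auto simp: E'_def\<close>)
    also have "\<dots> \<le> card E' + card (fst ` Xs)" by (rule card_Un_le)
    finally show ?thesis .
  qed
  also have "\<dots> \<le> card E' + card Xs" using card_image_le[OF finXs] by simp
  finally show ?thesis using q.planar by simp
qed

end

lemma wsum:
  fixes p :: real
  assumes "finite V" "A \<subseteq> V"
  shows "(\<Sum>S\<in>Pow V. (if A \<subseteq> S then p ^ card S * (1 - p) ^ card (V - S) else 0)) = p ^ card A"
proof -
  define g where "g i = (if i \<in> A then 0 else 1 - p)" for i
  have pa: "(\<Prod>i\<in>V. p + g i) = (\<Sum>S\<in>Pow V. (\<Prod>i\<in>S. p) * (\<Prod>i\<in>V - S. g i))"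
    by (rule prod_add[OF assms(1)])
  have pb: "(\<Prod>i\<in>V. p + g i) = p ^ card A"
  proof -
    have "(\<Prod>i\<in>V. p + g i) = (\<Prod>i\<in>V. if i \<in> A then p else 1)" by (rule prod.cong) (auto simp: g_def)
    also have "\<dots> = (\<Prod>i\<in>V \<inter> {i. i \<in> A}. p) * (\<Prod>i\<in>V \<inter> - {i. i \<in> A}. 1)"
      by (rule prod.If_cases[OF assms(1)])
    also have "V \<inter> {i. i \<in> A} = A" using assms(2) by auto
    finally show ?thesis by simp
  qed
  have pc: "(\<Prod>i\<in>S. p) * (\<Prod>i\<in>V - S. g i) = (if A \<subseteq> S then p ^ card S * (1 - p) ^ card (V - S) else 0)"
    if "S \<in> Pow V" for S
  proof (cases "A \<subseteq> S")
    case True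
    then have "(\<Prod>i\<in>V - S. g i) = (\<Prod>i\<in>V - S. 1 - p)" by (intro prod.cong) (auto simp: g_def)
    then show ?thesis using True by simp
  next
    case False
    then obtain i where "i \<in> A" "i \<notin> S" by auto
    then have "i \<in> V - S" "g i = 0" using assms(2) g_def by auto
    then have "(\<Prod>i\<in>V - S. g i) = 0" using assms(1) by (metis finite_Diff prod_zero_iff)
    then show ?thesis using False by simp
  qed
  have "(\<Sum>S\<in>Pow V. (if A \<subseteq> S then p ^ card S * (1 - p) ^ card (V - S) else 0))
     = (\<Sum>S\<in>Pow V. (\<Prod>i\<in>S. p) * (\<Prod>i\<in>V - S. g i))"
    by (rule sum.cong[OF refl]) (rule pc[symmetric])
  then show ?thesis using pa pb by simp
qed

lemma wsum_card:
  fixes p :: real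
  assumes "finite V" "finite I" "\<And>i. i \<in> I \<Longrightarrow> B i \<subseteq> V"
  shows "(\<Sum>S\<in>Pow V. p ^ card S * (1 - p) ^ card (V - S) * card {i\<in>I. B i \<subseteq> S}) = (\<Sum>i\<in>I. p ^ card (B i))"
proof -
  have "(\<Sum>S\<in>Pow V. p ^ card S * (1 - p) ^ card (V - S) * card {i\<in>I. B i \<subseteq> S})
      = (\<Sum>S\<in>Pow V. \<Sum>i\<in>I. (if B i \<subseteq> S then p ^ card S * (1 - p) ^ card (V - S) else 0))"
  proof (rule sum.cong)
    fix S assume "S \<in> Pow V"
    have "real (card {i\<in>I. B i \<subseteq> S}) = (\<Sum>i\<in>I. if B i \<subseteq> S then 1 else 0)"
      using assms(2) by (simp add: sum.inter_filter[symmetric])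
    then show "p ^ card S * (1 - p) ^ card (V - S) * card {i\<in>I. B i \<subseteq> S}
      = (\<Sum>i\<in>I. (if B i \<subseteq> S then p ^ card S * (1 - p) ^ card (V - S) else 0))"
    proof -
      have "p ^ card S * (1 - p) ^ card (V - S) * card {i\<in>I. B i \<subseteq> S}
          = (\<Sum>i\<in>I. p ^ card S * (1 - p) ^ card (V - S) * (if B i \<subseteq> S then 1 else 0))"
        unfolding \<open>real (card {i\<in>I. B i \<subseteq> S}) = _\<close> by (rule sum_distrib_left)
      also have "\<dots> = (\<Sum>i\<in>I. (if B i \<subseteq> S then p ^ card S * (1 - p) ^ card (V - S) else 0))"
        by (rule sum.cong) auto
      finally show ?thesis .
    qed
  qed simp
  also have "\<dots> = (\<Sum>i\<in>I. \<Sum>S\<in>Pow V. (if B i \<subseteq> S then p ^ card S * (1 - p) ^ card (V - S) else 0))"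
    by (rule sum.swap)
  also have "\<dots> = (\<Sum>i\<in>I. p ^ card (B i))"
    by (rule sum.cong) (use wsum[OF assms(1) assms(3)] in auto)
  finally show ?thesis .
qed


definition ends4 :: "(pt \<times> pt) \<times> (pt \<times> pt) \<Rightarrow> pt set" where
  "ends4 z = {fst (fst z), snd (fst z), fst (snd z), snd (snd z)}"

context pg begin

lemma crossing': "card E \<le> 4 * card V + card {(e,f). e \<in> E \<and> f \<in> E \<and> e \<noteq> f \<and> cross e f}"
  using crossing unfolding Xs_def .

lemma sub_pg: "S \<subseteq> V \<Longrightarrow> pg S {e\<in>E. fst e \<in> S \<and> snd e \<in> S}"
  apply unfold_locales
  using finV injV Eord H4 by (auto intro: finite_subset inj_on_subset)

lemma amp:
  fixes p :: real
  assumes four: "\<And>z. z \<in> Xs \<Longrightarrow> card (ends4 z) = 4" and p: "0 < p" "p \<le> 1"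
  shows "p^2 * card E \<le> 4 * p * card V + p^4 * card Xs"
proof -
  define w where "w S = p ^ card S * (1 - p) ^ card (V - S)" for S :: "pt set"
  have w0: "w S \<ge> 0" for S using p unfolding w_def by simp
  have loc: "real (card {e\<in>E. {fst e, snd e} \<subseteq> S}) \<le> 4 * real (card {v\<in>V. {v} \<subseteq> S}) + card {z\<in>Xs. ends4 z \<subseteq> S}"
    if S: "S \<in> Pow V" for S
  proof -
    have eq1: "{e\<in>E. {fst e, snd e} \<subseteq> S} = {e\<in>E. fst e \<in> S \<and> snd e \<in> S}" by auto
    have eq2: "{v\<in>V. {v} \<subseteq> S} = S" using S by auto
    have c: "card {e\<in>E. fst e \<in> S \<and> snd e \<in> S} \<le> 4 * card S +
       card {(e,f). e \<in> {e\<in>E. fst e \<in> S \<and> snd e \<in> S} \<and> f \<in> {e\<in>E. fst e \<in> S \<and> snd e \<in> S} \<and> e \<noteq> f \<and> cross e f}"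
      using pg.crossing'[OF sub_pg] S by blast
    have sub: "{(e,f). e \<in> {e\<in>E. fst e \<in> S \<and> snd e \<in> S} \<and> f \<in> {e\<in>E. fst e \<in> S \<and> snd e \<in> S} \<and> e \<noteq> f \<and> cross e f}
       \<subseteq> {z\<in>Xs. ends4 z \<subseteq> S}" unfolding Xs_def ends4_def by auto
    have "card {(e,f). e \<in> {e\<in>E. fst e \<in> S \<and> snd e \<in> S} \<and> f \<in> {e\<in>E. fst e \<in> S \<and> snd e \<in> S} \<and> e \<noteq> f \<and> cross e f}
       \<le> card {z\<in>Xs. ends4 z \<subseteq> S}" by (rule card_mono[OF _ sub]) (use finXs in auto)
    then show ?thesis using c eq1 eq2 by simp
  qed
  have "(\<Sum>S\<in>Pow V. w S * card {e\<in>E. {fst e, snd e} \<subseteq> S})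
     \<le> (\<Sum>S\<in>Pow V. w S * (4 * real (card {v\<in>V. {v} \<subseteq> S}) + card {z\<in>Xs. ends4 z \<subseteq> S}))"
    by (rule sum_mono) (use loc w0 in \<open>auto intro: mult_left_mono\<close>)
  also have "\<dots> = 4 * (\<Sum>S\<in>Pow V. w S * card {v\<in>V. {v} \<subseteq> S}) + (\<Sum>S\<in>Pow V. w S * card {z\<in>Xs. ends4 z \<subseteq> S})"
    by (simp add: sum.distrib sum_distrib_left algebra_simps)
  finally have ineq: "(\<Sum>S\<in>Pow V. w S * card {e\<in>E. {fst e, snd e} \<subseteq> S})
     \<le> 4 * (\<Sum>S\<in>Pow V. w S * card {v\<in>V. {v} \<subseteq> S}) + (\<Sum>S\<in>Pow V. w S * card {z\<in>Xs. ends4 z \<subseteq> S})" .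
  have s1: "(\<Sum>S\<in>Pow V. w S * card {e\<in>E. {fst e, snd e} \<subseteq> S}) = (\<Sum>e\<in>E. p ^ card {fst e, snd e})"
    unfolding w_def by (rule wsum_card[OF finV finE]) (use endsV in auto)
  have s1': "(\<Sum>e\<in>E. p ^ card {fst e, snd e}) = p^2 * card E"
  proof -
    have "card {fst e, snd e} = 2" if "e \<in> E" for e
    proof -
      have "fst e \<noteq> snd e" using Eord[OF that] by auto
      then show ?thesis by simp
    qed
    then show ?thesis by simp
  qed
  have s2: "(\<Sum>S\<in>Pow V. w S * card {v\<in>V. {v} \<subseteq> S}) = (\<Sum>v\<in>V. p ^ card {v})"
    unfolding w_def by (rule wsum_card[OF finV finV]) auto
  have s3: "(\<Sum>S\<in>Pow V. w S * card {z\<in>Xs. ends4 z \<subseteq> S}) = (\<Sum>z\<in>Xs. p ^ card (ends4 z))"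
    unfolding w_def by (rule wsum_card[OF finV finXs]) (use endsV in \<open>auto simp: Xs_def ends4_def\<close>)
  have s3': "(\<Sum>z\<in>Xs. p ^ card (ends4 z)) = p^4 * card Xs" using four by simp
  have "p^2 * card E \<le> 4 * (real (card V) * p) + p ^ 4 * real (card Xs)" using ineq s1 s1' s2 s3 s3' by simp
  then show ?thesis by (simp add: algebra_simps)
qed

lemma ST_core:
  assumes four: "\<And>z. z \<in> Xs \<Longrightarrow> card (ends4 z) = 4"
    and big: "8 * card V \<le> card E" and V0: "card V > 0"
  shows "real (card E) ^ 3 \<le> 128 * real (card V) ^ 2 * card Xs"
proof -
  define e where "e = real (card E)"
  define v where "v = real (card V)"
  define x where "x = real (card Xs)"
  have v0: "v > 0" using V0 v_def by simp
  have ev: "8 * v \<le> e" using big unfolding e_def v_def by linarith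
  have e0: "e > 0" using v0 ev by simp
  define p where "p = 8 * v / e"
  have p: "0 < p" "p \<le> 1" using v0 e0 ev unfolding p_def by auto
  have "p^2 * e \<le> 4 * p * v + p^4 * x" using amp[OF four p] unfolding e_def v_def x_def by simp
  then have "64 * v^2 / e \<le> 32 * v^2 / e + 4096 * v^4 * x / e^4"
    unfolding p_def using e0 by (simp add: power2_eq_square power4_eq_xxxx field_simps)
  then have "32 * v^2 / e \<le> 4096 * v^4 * x / e^4" by simp
  then have "32 * v^2 * e^3 \<le> 4096 * v^4 * x" using e0 by (simp add: field_simps power_eq_if)
  moreover have "4096 * v^4 * x = 32 * v^2 * (128 * v^2 * x)" by (simp add: power2_eq_square power4_eq_xxxx)
  ultimately have "32 * v^2 * e^3 \<le> 32 * v^2 * (128 * v^2 * x)" by simp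
  then have "e^3 \<le> 128 * v^2 * x" by (rule mult_left_le_imp_le) (use v0 in simp)
  then show ?thesis unfolding e_def v_def x_def .
qed

end



lemma line_graph:
  assumes l: "is_line l" and ab: "a \<in> l" "b \<in> l" "fst a \<noteq> fst b"
  shows "p \<in> l \<longleftrightarrow> snd p = hgt (a,b) (fst p)"
proof -
  obtain \<alpha> \<beta> \<gamma> where ne: "(\<alpha>, \<beta>) \<noteq> (0,0)" and leq: "l = {(x, y). \<alpha> * x + \<beta> * y = \<gamma>}"
    using l unfolding is_line_def by blast
  obtain xa ya where a: "a = (xa, ya)" by (cases a)
  obtain xb yb where b: "b = (xb, yb)" by (cases b)
  have ea: "\<alpha> * xa + \<beta> * ya = \<gamma>" using ab(1) leq a by auto
  have eb: "\<alpha> * xb + \<beta> * yb = \<gamma>" using ab(2) leq b by auto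
  have xab: "xa \<noteq> xb" using ab(3) a b by simp
  have b0: "\<beta> \<noteq> 0"
  proof
    assume "\<beta> = 0"
    then have "\<alpha> \<noteq> 0" using ne by simp
    moreover have "\<alpha> * xa = \<alpha> * xb" using ea eb \<open>\<beta> = 0\<close> by simp
    ultimately show False using xab by simp
  qed
  have yb: "yb = (\<gamma> - \<alpha> * xb) / \<beta>" "ya = (\<gamma> - \<alpha> * xa) / \<beta>" using ea eb b0 by (simp_all add: field_simps)
  have h: "hgt (a,b) x = (\<gamma> - \<alpha> * x) / \<beta>" for x
  proof -
    have d: "xb - xa \<noteq> 0" using xab by simp
    have "hgt (a,b) x = ya + (x - xa) * ((yb - ya) / (xb - xa))" unfolding hgt_def slope_def a b by simp
    also have "(yb - ya) = - \<alpha> / \<beta> * (xb - xa)" using yb b0 by (simp add: field_simps)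
    also have "- \<alpha> / \<beta> * (xb - xa) / (xb - xa) = - \<alpha> / \<beta>" using d by simp
    finally show ?thesis using yb b0 by (simp add: field_simps)
  qed
  obtain x y where p: "p = (x, y)" by (cases p)
  have "p \<in> l \<longleftrightarrow> \<alpha> * x + \<beta> * y = \<gamma>" using leq p by auto
  also have "\<dots> \<longleftrightarrow> y = (\<gamma> - \<alpha> * x) / \<beta>" using b0 by (auto simp: field_simps)
  finally show ?thesis using h p by simp
qed

lemma line_vert:
  assumes l: "is_line l" and pq: "p \<in> l" "q \<in> l" "fst p = fst q" "p \<noteq> q"
  shows "l = {z. fst z = fst p}"
proof -
  obtain \<alpha> \<beta> \<gamma> where ne: "(\<alpha>, \<beta>) \<noteq> (0,0)" and leq: "l = {(x, y). \<alpha> * x + \<beta> * y = \<gamma>}"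
    using l unfolding is_line_def by blast
  obtain xp yp where p: "p = (xp, yp)" by (cases p)
  obtain xq yq where q: "q = (xq, yq)" by (cases q)
  have ep: "\<alpha> * xp + \<beta> * yp = \<gamma>" using pq(1) leq p by auto
  have eq: "\<alpha> * xq + \<beta> * yq = \<gamma>" using pq(2) leq q by auto
  have "yp \<noteq> yq" using pq(3,4) p q by auto
  moreover have "xp = xq" using pq(3) p q by simp
  ultimately have b0: "\<beta> = 0" using ep eq by (metis add_left_cancel mult_cancel_left)
  then have a0: "\<alpha> \<noteq> 0" using ne by simp
  show ?thesis
  proof (rule set_eqI)
    fix z :: "real \<times> real"
    obtain x y where z: "z = (x,y)" by (cases z)
    have "z \<in> l \<longleftrightarrow> \<alpha> * x = \<alpha> * xp" using leq z b0 ep by auto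
    also have "\<dots> \<longleftrightarrow> x = xp" using a0 by simp
    finally show "z \<in> l \<longleftrightarrow> z \<in> {z. fst z = fst p}" using z p by simp
  qed
qed

lemma two_lines:
  assumes "is_line l" "is_line l'" "p \<in> l" "q \<in> l" "p \<in> l'" "q \<in> l'" "p \<noteq> q"
  shows "l = l'"
proof (cases "fst p = fst q")
  case True
  then show ?thesis using line_vert[OF assms(1,3,4) True assms(7)] line_vert[OF assms(2,5,6) True assms(7)] by simp
next
  case False
  show ?thesis
  proof (rule set_eqI)
    fix z show "z \<in> l \<longleftrightarrow> z \<in> l'"
      using line_graph[OF assms(1,3,4) False] line_graph[OF assms(2,5,6) False] by simp
  qed
qed


locale geo =
  fixes P :: "pt set" and L :: "pt set set"
  assumes finP: "finite P" and injP: "inj_on fst P" and finL: "finite L"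
    and lines: "l \<in> L \<Longrightarrow> is_line l"
begin

definition cons where
  "cons l e \<longleftrightarrow> fst e \<in> l \<and> snd e \<in> l \<and> (\<forall>c\<in>P \<inter> l. \<not>(fst (fst e) < fst c \<and> fst c < fst (snd e)))"

definition EG where
  "EG = {e. fst e \<in> P \<and> snd e \<in> P \<and> fst (fst e) < fst (snd e) \<and> (\<exists>l\<in>L. cons l e)}"

definition lineof where "lineof e = (SOME l. l \<in> L \<and> cons l e)"

lemma lineof: "e \<in> EG \<Longrightarrow> lineof e \<in> L \<and> cons (lineof e) e"
  unfolding lineof_def EG_def by (rule someI_ex) auto

lemma eqP: "p \<in> P \<Longrightarrow> q \<in> P \<Longrightarrow> fst p = fst q \<Longrightarrow> p = q"
  using injP by (auto simp: inj_on_def)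

lemma hgt_line:
  assumes "e \<in> EG" shows "p \<in> lineof e \<longleftrightarrow> snd p = hgt e (fst p)"
proof -
  have "lineof e \<in> L" "fst e \<in> lineof e" "snd e \<in> lineof e" "fst (fst e) \<noteq> fst (snd e)"
    using lineof[OF assms] assms unfolding cons_def EG_def by auto
  from line_graph[OF lines[OF this(1)] this(2,3,4)] show ?thesis by simp
qed

lemma cons_unique:
  assumes "e \<in> EG" "l \<in> L" "fst e \<in> l" "snd e \<in> l" shows "l = lineof e"
proof -
  have "fst e \<noteq> snd e" using assms(1) unfolding EG_def by auto
  then show ?thesis using two_lines[OF lines[OF assms(2)] lines[of "lineof e"] assms(3,4)] lineof[OF assms(1)]
    unfolding cons_def by auto
qed

sublocale g: pg P EG
proof
  show "finite P" by (rule finP)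
  show "inj_on fst P" by (rule injP)
  show "EG \<subseteq> P \<times> P" unfolding EG_def by auto
  show "fst (fst e) < fst (snd e)" if "e \<in> EG" for e using that unfolding EG_def by auto
  show "snd p \<noteq> hgt e (fst p)" if "p \<in> P" "e \<in> EG" "fst (fst e) < fst p" "fst p < fst (snd e)" for p e
  proof
    assume "snd p = hgt e (fst p)"
    then have "p \<in> lineof e" using hgt_line[OF that(2)] by simp
    then show False using lineof[OF that(2)] that unfolding cons_def by auto
  qed
qed

lemma same_line:
  assumes e: "e \<in> EG" and f: "f \<in> EG" and l: "lineof e = lineof f" and ne: "e \<noteq> f"
    and z: "ondom e z" "ondom f z"
  shows "(z, hgt e z) \<in> {fst e, snd e} \<inter> {fst f, snd f}"
proof -
  define l where "l = lineof e"
  have ce: "cons l e" and cf: "cons l f" using lineof[OF e] lineof[OF f] l l_def by auto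
  have P4: "fst e \<in> P" "snd e \<in> P" "fst f \<in> P" "snd f \<in> P" using e f unfolding EG_def by auto
  have o: "fst (fst e) < fst (snd e)" "fst (fst f) < fst (snd f)" using e f unfolding EG_def by auto
  have n1: "\<not>(fst (fst e) < fst (fst f) \<and> fst (fst f) < fst (snd e))"
    "\<not>(fst (fst e) < fst (snd f) \<and> fst (snd f) < fst (snd e))"
    using ce cf P4 unfolding cons_def by auto
  have n2: "\<not>(fst (fst f) < fst (fst e) \<and> fst (fst e) < fst (snd f))"
    "\<not>(fst (fst f) < fst (snd e) \<and> fst (snd e) < fst (snd f))"
    using ce cf P4 unfolding cons_def by auto
  have zz: "fst (fst e) \<le> z" "z \<le> fst (snd e)" "fst (fst f) \<le> z" "z \<le> fst (snd f)"
    using z unfolding ondom_def by auto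
  have cases: "(fst (fst e) = fst (fst f) \<and> fst (snd e) = fst (snd f)) \<or>
      (z = fst (snd e) \<and> z = fst (fst f)) \<or> (z = fst (fst e) \<and> z = fst (snd f))"
    using n1 n2 zz o by linarith
  then show ?thesis
  proof (elim disjE)
    assume "fst (fst e) = fst (fst f) \<and> fst (snd e) = fst (snd f)"
    then have "fst e = fst f" "snd e = snd f" using eqP P4 by auto
    then show ?thesis using ne by (simp add: prod_eq_iff)
  next
    assume a: "z = fst (snd e) \<and> z = fst (fst f)"
    then have "snd e = fst f" using eqP P4 by auto
    moreover have "(z, hgt e z) = snd e" using a hgt_right o(1) by (simp add: prod_eq_iff)
    ultimately show ?thesis by simp
  next
    assume a: "z = fst (fst e) \<and> z = fst (snd f)"
    then have "fst e = snd f" using eqP P4 by auto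
    moreover have "(z, hgt e z) = fst e" using a hgt_left by (simp add: prod_eq_iff)
    ultimately show ?thesis by simp
  qed
qed


lemma ends_notP:
  assumes e: "e \<in> EG" and x: "ondom e x" and q: "(x, hgt e x) \<in> P"
  shows "(x, hgt e x) \<in> {fst e, snd e}"
proof -
  have o: "fst (fst e) < fst (snd e)" using e unfolding EG_def by auto
  have "\<not>(fst (fst e) < x \<and> x < fst (snd e))"
  proof
    assume a: "fst (fst e) < x \<and> x < fst (snd e)"
    have inl: "(x, hgt e x) \<in> lineof e" using hgt_line[OF e] by simp
    have cc: "\<forall>c\<in>P \<inter> lineof e. \<not>(fst (fst e) < fst c \<and> fst c < fst (snd e))"
      using lineof[OF e] unfolding cons_def by blast
    from bspec[OF cc, of "(x, hgt e x)"] q inl a show False by auto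
  qed
  then have "x = fst (fst e) \<or> x = fst (snd e)" using x unfolding ondom_def by auto
  then show ?thesis
  proof
    assume "x = fst (fst e)" then have "(x, hgt e x) = fst e" using hgt_left by (simp add: prod_eq_iff)
    then show ?thesis by simp
  next
    assume "x = fst (snd e)" then have "(x, hgt e x) = snd e" using hgt_right o by (simp add: prod_eq_iff)
    then show ?thesis by simp
  qed
qed

lemma cross_pt:
  assumes z: "(e,f) \<in> g.Xs"
  shows "\<exists>q. ondom e (fst q) \<and> ondom f (fst q) \<and> q \<in> lineof e \<and> q \<in> lineof f \<and> q \<notin> P \<and> lineof e \<noteq> lineof f"
proof -
  have e: "e \<in> EG" and f: "f \<in> EG" and ne: "e \<noteq> f" and c: "cross e f" using z unfolding g.Xs_def by auto
  obtain x where x: "ondom e x" "ondom f x" "hgt e x = hgt f x" "(x, hgt e x) \<notin> {fst e, snd e} \<inter> {fst f, snd f}"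
    using c unfolding cross_def by blast
  define q where "q = (x, hgt e x)"
  have q1: "q \<in> lineof e" using hgt_line[OF e] q_def by simp
  have q2: "q \<in> lineof f" using hgt_line[OF f] q_def x(3) by simp
  have ll: "lineof e \<noteq> lineof f" using same_line[OF e f _ ne x(1,2)] x(4) by auto
  have qP: "q \<notin> P"
  proof
    assume qP: "q \<in> P"
    have "q \<in> {fst e, snd e}" using ends_notP[OF e x(1)] qP q_def by simp
    moreover have "q \<in> {fst f, snd f}" using ends_notP[OF f x(2)] qP q_def x(3) by simp
    ultimately show False using x(4) q_def by auto
  qed
  show ?thesis using q1 q2 ll qP x q_def by auto
qed

lemma Xs_card: "card g.Xs \<le> card L ^ 2"
proof -
  have inj: "inj_on (\<lambda>z. (lineof (fst z), lineof (snd z))) g.Xs"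
  proof (rule inj_onI)
    fix z z' assume zz: "z \<in> g.Xs" "z' \<in> g.Xs" and eq: "(lineof (fst z), lineof (snd z)) = (lineof (fst z'), lineof (snd z'))"
    obtain e f where z: "z = (e,f)" by (cases z)
    obtain e' f' where z': "z' = (e',f')" by (cases z')
    have m: "(e,f) \<in> g.Xs" "(e',f') \<in> g.Xs" using zz z z' by auto
    have EE: "e \<in> EG" "f \<in> EG" "e' \<in> EG" "f' \<in> EG" using m unfolding g.Xs_def by auto
    obtain q where q: "ondom e (fst q)" "ondom f (fst q)" "q \<in> lineof e" "q \<in> lineof f" "q \<notin> P" "lineof e \<noteq> lineof f"
      using cross_pt[OF m(1)] by blast
    obtain q' where q': "ondom e' (fst q')" "ondom f' (fst q')" "q' \<in> lineof e'" "q' \<in> lineof f'" "q' \<notin> P"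
      using cross_pt[OF m(2)] by blast
    have l1: "lineof e' = lineof e" "lineof f' = lineof f" using eq z z' by auto
    have "q = q'"
    proof (rule ccontr)
      assume "q \<noteq> q'"
      then have "lineof e = lineof f"
        using two_lines[OF lines lines q(3) q'(3)[unfolded l1] q(4) q'(4)[unfolded l1]] lineof EE by blast
      then show False using q(6) by simp
    qed
    have "e = e'"
    proof (rule ccontr)
      assume ne: "e \<noteq> e'"
      have "(fst q, hgt e (fst q)) \<in> {fst e, snd e}" using same_line[OF EE(1) EE(3) l1(1)[symmetric] ne q(1)] q'(1) \<open>q = q'\<close> by auto
      moreover have "(fst q, hgt e (fst q)) = q" using hgt_line[OF EE(1)] q(3) by (simp add: prod_eq_iff)
      ultimately have "q \<in> P" using EE(1) unfolding EG_def by auto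
      then show False using q(5) by simp
    qed
    moreover have "f = f'"
    proof (rule ccontr)
      assume ne: "f \<noteq> f'"
      have "(fst q, hgt f (fst q)) \<in> {fst f, snd f}" using same_line[OF EE(2) EE(4) l1(2)[symmetric] ne q(2)] q'(2) \<open>q = q'\<close> by auto
      moreover have "(fst q, hgt f (fst q)) = q" using hgt_line[OF EE(2)] q(4) by (simp add: prod_eq_iff)
      ultimately have "q \<in> P" using EE(2) unfolding EG_def by auto
      then show False using q(5) by simp
    qed
    ultimately show "z = z'" using z z' by simp
  qed
  have sub: "(\<lambda>z. (lineof (fst z), lineof (snd z))) ` g.Xs \<subseteq> L \<times> L"
    using lineof unfolding g.Xs_def by auto
  have "card g.Xs = card ((\<lambda>z. (lineof (fst z), lineof (snd z))) ` g.Xs)" using card_image[OF inj] by simp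
  also have "\<dots> \<le> card (L \<times> L)" by (rule card_mono[OF _ sub]) (use finL in simp)
  finally show ?thesis by (simp add: card_cartesian_product power2_eq_square)
qed

lemma four: "z \<in> g.Xs \<Longrightarrow> card (ends4 z) = 4"
proof -
  assume m: "z \<in> g.Xs"
  obtain e f where z: "z = (e,f)" by (cases z)
  have m': "(e,f) \<in> g.Xs" using m z by simp
  have EE: "e \<in> EG" "f \<in> EG" using m' unfolding g.Xs_def by auto
  obtain q where q: "q \<in> lineof e" "q \<in> lineof f" "q \<notin> P" "lineof e \<noteq> lineof f"
    using cross_pt[OF m'] by blast
  have d: "fst e \<noteq> snd e" "fst f \<noteq> snd f" using EE unfolding EG_def by auto
  have nc: "p \<notin> {fst f, snd f}" if "p \<in> {fst e, snd e}" for p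
  proof
    assume pf: "p \<in> {fst f, snd f}"
    have pe: "p \<in> lineof e" "p \<in> lineof f" "p \<in> P" using that pf lineof[OF EE(1)] lineof[OF EE(2)] EE
      unfolding cons_def EG_def by auto
    have pq: "p \<noteq> q" using pe(3) q(3) by auto
    have L2: "lineof e \<in> L" "lineof f \<in> L" using lineof EE by auto
    have "lineof e = lineof f" by (rule two_lines[OF lines[OF L2(1)] lines[OF L2(2)] pe(1) q(1) pe(2) q(2) pq])
    then show False using q(4) by simp
  qed
  have "fst e \<noteq> fst f" "fst e \<noteq> snd f" "snd e \<noteq> fst f" "snd e \<noteq> snd f" using nc by auto
  then show ?thesis using d z unfolding ends4_def by simp
qed

lemma inc: "card (incidences P L) \<le> card EG + card L"
proof -
  define El where "El l = {(a,b). a \<in> P \<inter> l \<and> b \<in> P \<inter> l \<and> fst a < fst b \<and> \<not>(\<exists>c\<in>P \<inter> l. fst a < fst c \<and> fst c < fst b)}" for l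
  have "incidences P L = (\<lambda>(l,p). (p,l)) ` (SIGMA l:L. P \<inter> l)" unfolding incidences_def by auto
  moreover have "inj_on (\<lambda>(l,p). (p,l)) (SIGMA l:L. P \<inter> l)" by (auto simp: inj_on_def)
  ultimately have "card (incidences P L) = card (SIGMA l:L. P \<inter> l)" by (simp add: card_image)
  also have "\<dots> = (\<Sum>l\<in>L. card (P \<inter> l))" using finL finP by simp
  also have "\<dots> \<le> (\<Sum>l\<in>L. card (El l) + 1)"
  proof (rule sum_mono)
    fix l assume "l \<in> L"
    show "card (P \<inter> l) \<le> card (El l) + 1" unfolding El_def
      by (rule consec_card) (use finP injP in \<open>auto intro: inj_on_subset\<close>)
  qed
  also have "\<dots> = (\<Sum>l\<in>L. card (El l)) + card L" by (simp add: sum_Suc)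
  also have "(\<Sum>l\<in>L. card (El l)) = card (\<Union>l\<in>L. El l)"
  proof (rule card_UN_disjoint[symmetric])
    show "finite L" by (rule finL)
    show "\<forall>l\<in>L. finite (El l)"
    proof
      fix l show "finite (El l)" by (rule finite_subset[of _ "P \<times> P"]) (auto simp: El_def finP)
    qed
    show "\<forall>i\<in>L. \<forall>j\<in>L. i \<noteq> j \<longrightarrow> El i \<inter> El j = {}"
    proof (intro ballI impI)
      fix i j assume ij: "i \<in> L" "j \<in> L" "i \<noteq> j"
      have "z \<notin> El i \<inter> El j" for z
      proof
        assume "z \<in> El i \<inter> El j"
        then have "fst z \<in> i" "snd z \<in> i" "fst z \<in> j" "snd z \<in> j" "fst z \<noteq> snd z" unfolding El_def by auto
        then show False using two_lines[OF lines lines] ij by blast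
      qed
      then show "El i \<inter> El j = {}" by blast
    qed
  qed
  also have "card (\<Union>l\<in>L. El l) \<le> card EG"
  proof (rule card_mono)
    show "finite EG" by (rule g.finE)
    show "(\<Union>l\<in>L. El l) \<subseteq> EG"
    proof
      fix z assume "z \<in> (\<Union>l\<in>L. El l)"
      then obtain l where "l \<in> L" "z \<in> El l" by auto
      then show "z \<in> EG" unfolding El_def EG_def cons_def by auto
    qed
  qed
  finally show ?thesis by simp
qed

lemma ST: "\<exists>Eb::real\<ge>0. real (card (incidences P L)) \<le> card L + 8 * card P + Eb \<and>
    Eb ^ 3 \<le> 128 * real (card P) ^ 2 * real (card L) ^ 2"
proof (cases "8 * card P \<le> card EG \<and> card P > 0")
  case True
  have "real (card EG) ^ 3 \<le> 128 * real (card P) ^ 2 * card g.Xs"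
    by (rule g.ST_core) (use four True in auto)
  also have "\<dots> \<le> 128 * real (card P) ^ 2 * real (card L) ^ 2"
    using Xs_card by (intro mult_left_mono) (auto simp: of_nat_power[symmetric] simp del: of_nat_power)
  finally show ?thesis using inc by (intro exI[of _ "real (card EG)"]) auto
next
  case False
  have "card EG \<le> 8 * card P"
  proof (cases "card P > 0")
    case True then show ?thesis using False by simp
  next
    case False
    then have "P = {}" using finP by simp
    then have "EG = {}" unfolding EG_def by auto
    then show ?thesis by simp
  qed
  then show ?thesis using inc by (intro exI[of _ 0]) auto
qed

end



lemma ST_general:
  assumes finP: "finite P" and finL: "finite L" and lines: "\<forall>l\<in>L. is_line l"
  shows "\<exists>Eb::real\<ge>0. real (card (incidences P L)) \<le> card L + 8 * card P + Eb \<and>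
    Eb ^ 3 \<le> 128 * real (card P) ^ 2 * real (card L) ^ 2"
proof -
  define B where "B = (\<lambda>(p,q). (fst q - fst p) / (snd p - snd (q::pt))) ` (P \<times> P)"
  have "finite B" unfolding B_def using finP by simp
  then obtain t where t: "t \<notin> B" using ex_new_if_finite[OF infinite_UNIV_char_0] by blast
  define T where "T p = (fst p + t * snd p, snd (p::pt))" for p
  have injT: "inj T" unfolding T_def by (auto simp: inj_on_def)
  have injTP: "inj_on fst (T ` P)"
  proof (rule inj_onI)
    fix u v assume uv: "u \<in> T ` P" "v \<in> T ` P" "fst u = fst v"
    then obtain p q where pq: "p \<in> P" "q \<in> P" "u = T p" "v = T q" by auto
    have e: "fst p + t * snd p = fst q + t * snd q" using uv(3) pq unfolding T_def by simp
    show "u = v"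
    proof (cases "snd p = snd q")
      case True
      then have "fst p = fst q" using e by simp
      then have "p = q" using True by (simp add: prod_eq_iff)
      then show ?thesis using pq by simp
    next
      case False
      then have "t = (fst q - fst p) / (snd p - snd q)" using e by (simp add: field_simps)
      then have "t \<in> B" unfolding B_def using pq by (intro image_eqI[of _ _ "(p,q)"]) auto
      then show ?thesis using t by simp
    qed
  qed
  have Tl: "is_line (T ` l)" if "l \<in> L" for l
  proof -
    have "is_line l" using lines that by blast
    then obtain a b c where ne: "(a, b) \<noteq> (0,0)" and leq: "l = {(x, y). a * x + b * y = c}"
      unfolding is_line_def by blast
    have "T ` l = {(x, y). a * x + (b - a * t) * y = c}"
    proof (rule set_eqI)
      fix z :: pt
      obtain x y where z: "z = (x,y)" by (cases z)
      have "z \<in> T ` l \<longleftrightarrow> (x - t * y, y) \<in> l"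
      proof
        assume "z \<in> T ` l"
        then obtain p where "p \<in> l" "z = T p" by auto
        then show "(x - t * y, y) \<in> l" using z unfolding T_def by auto
      next
        assume "(x - t * y, y) \<in> l"
        moreover have "z = T (x - t * y, y)" using z unfolding T_def by simp
        ultimately show "z \<in> T ` l" by blast
      qed
      also have "\<dots> \<longleftrightarrow> a * x + (b - a * t) * y = c" using leq by (auto simp: algebra_simps)
      finally show "z \<in> T ` l \<longleftrightarrow> z \<in> {(x, y). a * x + (b - a * t) * y = c}" using z by simp
    qed
    moreover have "(a, b - a * t) \<noteq> (0,0)" using ne by auto
    ultimately show ?thesis unfolding is_line_def by blast
  qed
  define P' where "P' = T ` P"
  define L' where "L' = (\<lambda>l. T ` l) ` L"
  interpret gg: geo P' L'
  proof
    show "finite P'" using finP P'_def by simp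
    show "inj_on fst P'" using injTP P'_def by simp
    show "finite L'" using finL L'_def by simp
    show "is_line l" if "l \<in> L'" for l using that Tl L'_def by auto
  qed
  have cP: "card P' = card P" unfolding P'_def by (rule card_image) (use injT in \<open>auto intro: inj_on_subset\<close>)
  have injL: "inj_on (\<lambda>l. T ` l) L" using injT by (auto simp: inj_on_def inj_image_eq_iff)
  have cL: "card L' = card L" unfolding L'_def by (rule card_image[OF injL])
  have incI: "incidences P' L' = (\<lambda>(p,l). (T p, T ` l)) ` incidences P L"
  proof
    show "incidences P' L' \<subseteq> (\<lambda>(p,l). (T p, T ` l)) ` incidences P L"
    proof
      fix z assume "z \<in> incidences P' L'"
      then obtain u m where z: "z = (u,m)" "u \<in> P'" "m \<in> L'" "u \<in> m" unfolding incidences_def by auto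
      then obtain p l where pl: "p \<in> P" "l \<in> L" "u = T p" "m = T ` l" unfolding P'_def L'_def by auto
      have "p \<in> l" using z(4) pl inj_image_mem_iff[OF injT] by simp
      then have "(p,l) \<in> incidences P L" using pl unfolding incidences_def by simp
      then show "z \<in> (\<lambda>(p,l). (T p, T ` l)) ` incidences P L" using z pl by (auto intro: rev_image_eqI[of "(p,l)"])
    qed
    show "(\<lambda>(p,l). (T p, T ` l)) ` incidences P L \<subseteq> incidences P' L'"
      unfolding incidences_def P'_def L'_def by auto
  qed
  have injI: "inj_on (\<lambda>(p,l). (T p, T ` l)) (incidences P L)"
  proof (rule inj_onI)
    fix z z' assume "z \<in> incidences P L" "z' \<in> incidences P L"
      and eq: "(\<lambda>(p,l). (T p, T ` l)) z = (\<lambda>(p,l). (T p, T ` l)) z'"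
    obtain p l where z: "z = (p,l)" by (cases z)
    obtain p' l' where z': "z' = (p',l')" by (cases z')
    have "T p = T p'" "T ` l = T ` l'" using eq z z' by auto
    then have "p = p'" "l = l'" using injT by (auto simp: inj_eq inj_image_eq_iff)
    then show "z = z'" using z z' by simp
  qed
  have cI: "card (incidences P' L') = card (incidences P L)" unfolding incI by (rule card_image[OF injI])
  show ?thesis using gg.ST unfolding cP cL cI .
qed



lemma final_alg:
  fixes \<alpha> \<beta> A B C1 c M N Lc Pc I Eb :: real
  assumes ab: "\<alpha> + 2 * \<beta> = 1" "\<beta> \<le> 2/3" and AB: "A > 0" "B > 0" and MN: "M > 0" "N > 0"
    and C1: "C1 \<ge> 1" "C1 \<ge> (4 * A / B) ^ 3"
    and c: "c > 0" "c \<le> B / 32" "c^2 \<le> B^3 / (8192 * A^2)"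
    and r1: "M \<le> N^2 / C1" and r2: "N \<le> M^2 / C1"
    and Lc: "0 \<le> Lc" "Lc \<le> A * M powr \<alpha> * N powr \<beta>"
    and Pc: "0 \<le> Pc"
    and I: "B * M powr (\<alpha> - 1/3) * N powr (\<beta> + 2/3) \<le> I" "I \<le> Lc + 8 * Pc + Eb"
    and Eb: "0 \<le> Eb" "Eb ^ 3 \<le> 128 * Pc^2 * Lc^2"
  shows "c * M powr (\<alpha>/2 - 1/2) * N powr (\<beta>/2 + 1) \<le> Pc"
proof (rule ccontr)
  assume "\<not> ?thesis"
  then have Pc_lt: "Pc < c * M powr (\<alpha>/2 - 1/2) * N powr (\<beta>/2 + 1)" by simp
  define L0 where "L0 = A * M powr \<alpha> * N powr \<beta>"
  define I0 where "I0 = B * M powr (\<alpha> - 1/3) * N powr (\<beta> + 2/3)"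
  define P0 where "P0 = M powr (\<alpha>/2 - 1/2) * N powr (\<beta>/2 + 1)"
  have C1p: "C1 > 0" using C1 by simp
  have P0p: "P0 > 0" unfolding P0_def using MN by simp
  have I0p: "I0 > 0" unfolding I0_def using MN AB by simp
  have m3: "(M powr (1/3)) ^ 3 = M" using MN by (simp add: powr_power)
  have n3: "(N powr (2/3)) ^ 3 = N^2"
  proof -
    have "(N powr (2/3)) ^ 3 = N powr 2" using MN by (simp add: powr_power)
    also have "\<dots> = N^2" using MN(2) by (simp add: powr_numeral)
    finally show ?thesis .
  qed
  have "M * C1 \<le> N^2" using r1 C1p by (simp add: field_simps)
  then have "M * (4 * A / B) ^ 3 \<le> N^2" using C1 MN by (meson mult_left_mono order_trans less_imp_le)
  then have "M * (64 * A^3) \<le> B^3 * N^2" using AB by (simp add: power_divide field_simps)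
  then have "(4 * A * M powr (1/3)) ^ 3 \<le> (B * N powr (2/3)) ^ 3"
    by (simp add: power_mult_distrib m3 n3 algebra_simps)
  then have k1: "4 * A * M powr (1/3) \<le> B * N powr (2/3)"
    by (rule power_le_imp_le_base[where n=2, simplified]) (use AB MN in simp)
  have eL: "L0 = A * M powr (1/3) * (M powr (\<alpha> - 1/3) * N powr \<beta>)"
    unfolding L0_def using MN by (simp add: powr_add[symmetric])
  have eI: "I0 = B * N powr (2/3) * (M powr (\<alpha> - 1/3) * N powr \<beta>)"
    unfolding I0_def using MN by (simp add: powr_add[symmetric] algebra_simps)
  have F1: "4 * L0 \<le> I0"
    unfolding eL eI using k1 MN by (simp add: mult_right_mono[of _ _ "M powr (\<alpha> - 1/3) * N powr \<beta>"] mult.assoc[symmetric])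
  define t where "t = 1/3 - \<beta>/2"
  have t0: "t \<ge> 0" using ab unfolding t_def by simp
  have e2: "I0 / B = P0 * ((M^2 / N) powr t)"
  proof -
    have M2: "M^2 = M powr 2" using MN by (simp add: powr_numeral)
    have "(M^2 / N) powr t = (M powr 2) powr t / N powr t" unfolding M2 using MN by (simp add: powr_divide)
    also have "\<dots> = M powr (2 * t) * N powr (- t)" by (simp add: powr_powr powr_minus_divide)
    finally have "(M^2 / N) powr t = M powr (2 * t) * N powr (- t)" .
    then have "P0 * ((M^2 / N) powr t) = M powr (\<alpha>/2 - 1/2 + 2 * t) * N powr (\<beta>/2 + 1 - t)"
      unfolding P0_def using MN by (simp add: powr_add powr_diff powr_minus_divide algebra_simps)
    also have "\<alpha>/2 - 1/2 + 2 * t = \<alpha> - 1/3" using ab unfolding t_def by simp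
    also have "\<beta>/2 + 1 - t = \<beta> + 2/3" unfolding t_def by simp
    finally show ?thesis unfolding I0_def using AB by simp
  qed
  have "N * C1 \<le> M^2" using r2 C1p by (simp add: field_simps)
  moreover have "N \<le> N * C1" using C1(1) MN(2) by simp
  ultimately have "N \<le> M^2" by linarith
  then have "M^2 / N \<ge> 1" using MN by simp
  then have "(M^2 / N) powr t \<ge> 1" using t0 by (rule ge_one_powr_ge_zero)
  then have F2: "P0 \<le> I0 / B" using e2 P0p by (simp add: mult_le_cancel_left1)
  have F3: "(P0 * L0)^2 = A^2 * (I0 / B)^3"
  proof -
    have q1: "3/2 * \<alpha> - 1/2 = \<alpha> + (\<alpha>/2 - 1/2)" by simp
    have q2: "3/2 * \<beta> + 1 = \<beta> + (\<beta>/2 + 1)" by simp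
    have a1: "M powr (3/2 * \<alpha> - 1/2) = M powr \<alpha> * M powr (\<alpha>/2 - 1/2)" unfolding q1 by (rule powr_add)
    have a2: "N powr (3/2 * \<beta> + 1) = N powr \<beta> * N powr (\<beta>/2 + 1)" unfolding q2 by (rule powr_add)
    have "P0 * L0 = A * (M powr (3/2 * \<alpha> - 1/2) * N powr (3/2 * \<beta> + 1))"
      unfolding P0_def L0_def a1 a2 by (simp add: algebra_simps)
    then have "(P0 * L0)^2 = A^2 * (M powr (2 * (3/2 * \<alpha> - 1/2)) * N powr (2 * (3/2 * \<beta> + 1)))"
      using MN by (simp add: power_mult_distrib powr_power)
    moreover have "(I0 / B)^3 = M powr (3 * (\<alpha> - 1/3)) * N powr (3 * (\<beta> + 2/3))"
      unfolding I0_def using MN AB by (simp add: power_mult_distrib powr_power)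
    moreover have "2 * (3/2 * \<alpha> - 1/2) = 3 * (\<alpha> - 1/3)" "2 * (3/2 * \<beta> + 1) = 3 * (\<beta> + 2/3)" by simp_all
    ultimately show ?thesis by simp
  qed
  have t1: "Lc \<le> I0 / 4" using Lc F1 unfolding L0_def by simp
  have "8 * Pc < 8 * (c * P0)" using Pc_lt unfolding P0_def by simp
  also have "\<dots> \<le> 8 * (B / 32 * P0)" using c P0p by simp
  also have "\<dots> = B * P0 / 4" by simp
  also have "\<dots> \<le> I0 / 4" using F2 AB by (simp add: field_simps)
  finally have t2: "8 * Pc < I0 / 4" .
  have "Pc^2 \<le> (c * P0)^2" using Pc Pc_lt unfolding P0_def by (intro power_mono) auto
  moreover have "Lc^2 \<le> L0^2" using Lc unfolding L0_def by (intro power_mono) auto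
  ultimately have "128 * Pc^2 * Lc^2 \<le> 128 * (c * P0)^2 * L0^2"
    by (intro mult_mono) (auto intro: mult_left_mono)
  also have "\<dots> = 128 * c^2 * (P0 * L0)^2" by (simp add: power_mult_distrib)
  also have "\<dots> = 128 * c^2 * A^2 * (I0 / B)^3" using F3 by simp
  also have "\<dots> \<le> 128 * (B^3 / (8192 * A^2)) * A^2 * (I0 / B)^3"
    using c I0p AB by (intro mult_right_mono) auto
  also have "\<dots> = (I0 / 4)^3" using AB by (simp add: field_simps power3_eq_cube)
  finally have "Eb ^ 3 \<le> (I0 / 4)^3" using Eb by simp
  then have t3: "Eb \<le> I0 / 4"
    by (rule power_le_imp_le_base[where n=2, simplified]) (use I0p in simp)
  have "I < I0" using I(2) t1 t2 t3 I0p by linarith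
  then show False using I(1) unfolding I0_def by simp
qed


theorem proposition2p9:
  fixes \<alpha> \<beta> A B :: real
  assumes "\<alpha> + 2 * \<beta> = 1" and "\<beta> \<le> 2 / 3" and "A > 0" and "B > 0"
  shows "\<exists>C\<^sub>1 > 0. \<exists>c > 0. \<forall>(m::nat) (n::nat) (P::(real \<times> real) set) (L::(real \<times> real) set set).
           m > 0 \<longrightarrow> n > 0 \<longrightarrow>
           real m \<le> real n ^ 2 / C\<^sub>1 \<longrightarrow> real n \<le> real m ^ 2 / C\<^sub>1 \<longrightarrow>
           finite P \<longrightarrow> finite L \<longrightarrow> (\<forall>l\<in>L. is_line l) \<longrightarrow>
           real (card L) \<le> A * real m powr \<alpha> * real n powr \<beta> \<longrightarrow>
           real (card (incidences P L)) \<ge> B * real m powr (\<alpha> - 1/3) * real n powr (\<beta> + 2/3) \<longrightarrow>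
           real (card P) \<ge> c * real m powr (\<alpha>/2 - 1/2) * real n powr (\<beta>/2 + 1)"
  proof -
  define C1 where "C1 = max 1 ((4 * A / B) ^ 3)"
  define c where "c = min (B / 32) (sqrt (B^3 / (8192 * A^2)))"
  have C1p: "C1 > 0" "C1 \<ge> 1" "C1 \<ge> (4 * A / B) ^ 3" unfolding C1_def by auto
  have sq: "sqrt (B^3 / (8192 * A^2)) > 0" using assms(3,4) by simp
  have cp: "c > 0" "c \<le> B / 32" using sq assms(4) unfolding c_def by auto
  have "c \<le> sqrt (B^3 / (8192 * A^2))" unfolding c_def by simp
  then have "c^2 \<le> (sqrt (B^3 / (8192 * A^2)))^2" using cp by (intro power_mono) auto
  also have "\<dots> = B^3 / (8192 * A^2)" using assms(3,4) by simp
  finally have cp2: "c^2 \<le> B^3 / (8192 * A^2)" .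
  have main: "\<forall>(m::nat) (n::nat) (P::(real \<times> real) set) (L::(real \<times> real) set set).
           m > 0 \<longrightarrow> n > 0 \<longrightarrow>
           real m \<le> real n ^ 2 / C1 \<longrightarrow> real n \<le> real m ^ 2 / C1 \<longrightarrow>
           finite P \<longrightarrow> finite L \<longrightarrow> (\<forall>l\<in>L. is_line l) \<longrightarrow>
           real (card L) \<le> A * real m powr \<alpha> * real n powr \<beta> \<longrightarrow>
           real (card (incidences P L)) \<ge> B * real m powr (\<alpha> - 1/3) * real n powr (\<beta> + 2/3) \<longrightarrow>
           real (card P) \<ge> c * real m powr (\<alpha>/2 - 1/2) * real n powr (\<beta>/2 + 1)"
  proof (intro allI impI)
    fix m n :: nat and P :: "(real \<times> real) set" and L :: "(real \<times> real) set set"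
    assume h: "m > 0" "n > 0" "real m \<le> real n ^ 2 / C1" "real n \<le> real m ^ 2 / C1"
      "finite P" "finite L" "\<forall>l\<in>L. is_line l"
      "real (card L) \<le> A * real m powr \<alpha> * real n powr \<beta>"
      "real (card (incidences P L)) \<ge> B * real m powr (\<alpha> - 1/3) * real n powr (\<beta> + 2/3)"
    obtain Eb :: real where Eb: "Eb \<ge> 0" "real (card (incidences P L)) \<le> card L + 8 * card P + Eb"
      "Eb ^ 3 \<le> 128 * real (card P) ^ 2 * real (card L) ^ 2"
      using ST_general[OF h(5) h(6) h(7)] by blast
    have I2: "real (card (incidences P L)) \<le> real (card L) + 8 * real (card P) + Eb" using Eb(2) by simp
    have MN: "real m > 0" "real n > 0" using h(1,2) by auto
    show "real (card P) \<ge> c * real m powr (\<alpha>/2 - 1/2) * real n powr (\<beta>/2 + 1)"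
      by (rule final_alg[OF assms(1,2) assms(3,4) MN C1p(2,3) cp cp2 h(3) h(4) _ h(8) _ h(9) I2 Eb(1) Eb(3)]) auto
  qed
  show ?thesis using main C1p(1) cp(1) by blast
qed

end
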